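(* Let $l,r$ be positive integers. For every $n\ge r$, the sequence $k\mapsto\mathcal{A}_r^{(l)}(n,k)$ is log-concave (and hence unimodal).
   Context: A subexceedant function on $[n]$ is a map $f:[n]\to[n]$ with $1\le f(i)\le i$ for all $i$. Its block leader set is $\mathrm{bl}(f)=\{i\in[n]: f(i)\notin f(\{1,\dots,i-1\})\}$. For positive integers $l,r$, $\mathcal{A}_r^{(l)}(n,k)$ is the number of $l$-tuples $(f_1,\dots,f_l)$ of subexceedant functions on $[n]$ such that $\{1,\dots,r\}\subseteq\mathrm{bl}(f_1)$, $|\mathrm{bl}(f_1)|=k+1$, and $\mathrm{bl}(f_1)=\cdots=\mathrm{bl}(f_l)$. A sequence $(a_k)$ is log-concave if $a_k^2\ge a_{k-1}a_{k+1}$ for all $k$. *)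

theory Defs
  imports Main
begin

text \<open>Subexceedant functions on [n] = {1..n}, represented as functions nat => nat
  that are 0 outside {1..n} (so the set is finite).\<close>
definition subexc :: "nat \<Rightarrow> (nat \<Rightarrow> nat) set" where
  "subexc n = {f. (\<forall>i\<in>{1..n}. 1 \<le> f i \<and> f i \<le> i) \<and> (\<forall>i. i \<notin> {1..n} \<longrightarrow> f i = 0)}"

definition bl :: "nat \<Rightarrow> (nat \<Rightarrow> nat) \<Rightarrow> nat set" where
  "bl n f = {i\<in>{1..n}. f i \<notin> f ` {1..<i}}"

definition A :: "nat \<Rightarrow> nat \<Rightarrow> nat \<Rightarrow> nat \<Rightarrow> nat" where
  "A r l n k = card {fs. length fs = l \<and> (\<forall>f\<in>set fs. f \<in> subexc n)
      \<and> {1..r} \<subseteq> bl n (hd fs) \<and> card (bl n (hd fs)) = k + 1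
      \<and> (\<forall>f\<in>set fs. bl n f = bl n (hd fs))}"

end

theory Submission
  imports Defs Complex_Main
begin


definition nT :: "bool list \<Rightarrow> nat" where "nT xs = length (filter id xs)"
definition nF :: "bool list \<Rightarrow> nat" where "nF xs = length (filter Not xs)"

lemma nT_nF: "nT xs + nF xs = length xs"
  unfolding nT_def nF_def using sum_length_filter_compl[of id xs] by (simp add: comp_def)

lemma nT_append[simp]: "nT (u @ v) = nT u + nT v" by (simp add: nT_def)
lemma nF_append[simp]: "nF (u @ v) = nF u + nF v" by (simp add: nF_def)
lemma nT_Nil[simp]: "nT [] = 0" by (simp add: nT_def)
lemma nF_Nil[simp]: "nF [] = 0" by (simp add: nF_def)
lemma nT_single[simp]: "nT [s] = (if s then 1 else 0)" by (simp add: nT_def)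
lemma nF_single[simp]: "nF [s] = (if s then 0 else 1)" by (simp add: nF_def)
lemma nT_Cons[simp]: "nT (s # u) = (if s then 1 else 0) + nT u" by (simp add: nT_def)
lemma nF_Cons[simp]: "nF (s # u) = (if s then 0 else 1) + nF u" by (simp add: nF_def)

fun wt :: "nat \<Rightarrow> nat \<Rightarrow> bool list \<Rightarrow> nat" where
  "wt x y [] = 1"
| "wt x y (s # xs) = (if s then y * wt (Suc x) y xs else x * wt x (Suc y) xs)"

lemma wt_append: "wt x y (u @ v) = wt x y u * wt (x + nT u) (y + nF u) v"
  by (induction u arbitrary: x y) auto

lemma wt_snoc: "wt x y (u @ [s]) = wt x y u * (if s then y + nF u else x + nT u)"
  by (simp add: wt_append)

lemma frac_cmp: "0<q \<Longrightarrow> 0<q' \<Longrightarrow> p'*q \<le> p*q' \<Longrightarrow> p'/q' \<le> p/(q::real)"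
  by (simp add: divide_simps)

definition mu :: "nat \<Rightarrow> nat \<Rightarrow> real" where
  "mu b c = real ((b+1)*c) / real (b*(c-1))"

lemma mu_ge1: assumes "1 \<le> b" "2 \<le> c" shows "1 \<le> mu b c"
proof -
  have "b*(c-1) \<le> (b+1)*c" by (rule mult_le_mono) auto
  hence "real (b*(c-1)) \<le> real ((b+1)*c)" by (simp only: of_nat_le_iff)
  moreover have "0 < real (b*(c-1))" using assms by auto
  ultimately show ?thesis unfolding mu_def by (simp only: le_divide_eq_1_pos)
qed

lemma mu_mono: assumes "1 \<le> b" "b \<le> b'" "2 \<le> c" "c \<le> c'" shows "mu b' c' \<le> mu b c"
proof -
  have h1: "(b'+1)*b \<le> (b+1)*b'" using assms by (simp add: algebra_simps)
  have h2: "c'*(c-1) \<le> c*(c'-1)" using assms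
    by (simp add: algebra_simps diff_mult_distrib2)
  have "((b'+1)*c') * (b*(c-1)) \<le> ((b+1)*c) * (b'*(c'-1))"
  proof -
    have "((b'+1)*c') * (b*(c-1)) = ((b'+1)*b) * (c'*(c-1))" by (simp add: algebra_simps)
    also have "\<dots> \<le> ((b+1)*b') * (c*(c'-1))" using h1 h2 by (rule mult_mono) auto
    also have "\<dots> = ((b+1)*c) * (b'*(c'-1))" by (simp add: algebra_simps)
    finally show ?thesis .
  qed
  hence "real ((b'+1)*c') * real (b*(c-1)) \<le> real ((b+1)*c) * real (b'*(c'-1))"
    by (metis of_nat_le_iff of_nat_mult)
  moreover have "0 < real (b*(c-1))" "0 < real (b'*(c'-1))" using assms by auto
  ultimately show ?thesis unfolding mu_def by (rule frac_cmp[rotated 2])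
qed

lemma step_help:
  fixes Ov Nv m m' fo fn :: real
  assumes "Ov * m^D \<le> Nv" "0 \<le> Ov" "0 \<le> fn" "fo * m'^D' \<le> fn * m^D"
  shows "(Ov*fo) * m'^D' \<le> Nv*fn"
proof -
  have "(Ov*fo) * m'^D' = Ov * (fo * m'^D')" by simp
  also have "\<dots> \<le> Ov * (fn * m^D)" using assms by (simp add: mult_left_mono)
  also have "\<dots> = (Ov * m^D) * fn" by simp
  also have "\<dots> \<le> Nv * fn" using assms by (simp add: mult_right_mono)
  finally show ?thesis .
qed

lemma gen1: "0 < (q::real) \<Longrightarrow> q * (p / q) = p" by simp
lemma gen2: "0 < (q::real) \<Longrightarrow> x*q \<le> p*y \<Longrightarrow> x \<le> (p/q)*y"
  by (simp add: field_simps)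

lemma mu_pos: "1 \<le> b \<Longrightarrow> 2 \<le> c \<Longrightarrow> 0 \<le> mu b c"
  using mu_ge1[of b c] by simp

lemma case_EE:
  assumes "1 \<le> b" "2 \<le> c" "b \<le> d"
  shows "real (b*(d+1)) * mu b (c+1) ^ D \<le> real ((b+1)*d) * mu b c ^ D"
proof -
  have "mu b (c+1) ^ D \<le> mu b c ^ D"
    using assms mu_mono[of b b c "c+1"] mu_pos[of b "c+1"] by (intro power_mono) auto
  moreover have "b*(d+1) \<le> (b+1)*d" using assms by (simp add: algebra_simps)
  hence "real (b*(d+1)) \<le> real ((b+1)*d)" by (simp only: of_nat_le_iff)
  ultimately show ?thesis using mu_pos[of b "c+1"] assms
    by (intro mult_mono) auto
qed

lemma case_NN:
  assumes "1 \<le> b" "2 \<le> c" "c \<le> a"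
  shows "real (a*(c-1)) * mu (b+1) c ^ D \<le> real ((a-1)*c) * mu b c ^ D"
proof -
  have "mu (b+1) c ^ D \<le> mu b c ^ D"
    using assms mu_mono[of b "b+1" c c] mu_pos[of "b+1" c] by (intro power_mono) auto
  moreover have "a*(c-1) \<le> (a-1)*c" using assms by (simp add: algebra_simps diff_mult_distrib2)
  hence "real (a*(c-1)) \<le> real ((a-1)*c)" by (simp only: of_nat_le_iff)
  ultimately show ?thesis using mu_pos[of "b+1" c] assms
    by (intro mult_mono) auto
qed

lemma case_EN:
  assumes "1 \<le> b" "2 \<le> c"
  shows "real (b*(c-1)) * mu b c ^ (Suc D) \<le> real ((b+1)*c) * mu b c ^ D"
proof -
  have "0 < real (b*(c-1))" using assms by auto
  hence eq: "real (b*(c-1)) * mu b c = real ((b+1)*c)" unfolding mu_def by (rule gen1)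
  have "real (b*(c-1)) * mu b c ^ (Suc D) = (real (b*(c-1)) * mu b c) * mu b c ^ D"
    by (simp only: power_Suc mult.assoc)
  also have "\<dots> = real ((b+1)*c) * mu b c ^ D" by (simp only: eq)
  finally show ?thesis by (rule eq_refl)
qed

lemma case_NE:
  assumes "1 \<le> b" "2 \<le> c" "c+1 \<le> a" "b+1 \<le> d" "1 \<le> D"
  shows "real (a*(d+1)) * mu (b+1) (c+1) ^ (D-1) \<le> real ((a-1)*d) * mu b c ^ D"
proof -
  have p1: "mu (b+1) (c+1) ^ (D-1) \<le> mu b c ^ (D-1)"
    using assms mu_mono[of b "b+1" c "c+1"] mu_pos[of "b+1" "c+1"] by (intro power_mono) auto
  have h1: "a*(c-1) \<le> (a-1)*c" using assms by (simp add: algebra_simps diff_mult_distrib2)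
  have h2: "(d+1)*b \<le> d*(b+1)" using assms by (simp add: algebra_simps)
  have "(a*(d+1))*(b*(c-1)) \<le> ((b+1)*c)*((a-1)*d)"
  proof -
    have "(a*(d+1))*(b*(c-1)) = (a*(c-1))*((d+1)*b)" by (simp add: algebra_simps)
    also have "\<dots> \<le> ((a-1)*c)*(d*(b+1))" using h1 h2 by (rule mult_le_mono)
    also have "\<dots> = ((b+1)*c)*((a-1)*d)" by (simp add: algebra_simps)
    finally show ?thesis .
  qed
  hence i1: "real (a*(d+1)) * real (b*(c-1)) \<le> real ((b+1)*c) * real ((a-1)*d)"
    by (metis of_nat_le_iff of_nat_mult)
  have i2: "0 < real (b*(c-1))" using assms by auto
  have k: "real (a*(d+1)) \<le> mu b c * real ((a-1)*d)"
    unfolding mu_def using i2 i1 by (rule gen2)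
  have "real (a*(d+1)) * mu (b+1) (c+1) ^ (D-1) \<le> real (a*(d+1)) * mu b c ^ (D-1)"
    using p1 by (intro mult_left_mono) auto
  also have "\<dots> \<le> (mu b c * real ((a-1)*d)) * mu b c ^ (D-1)"
    using k mu_pos[of b c] assms by (intro mult_right_mono) auto
  also have "\<dots> = real ((a-1)*d) * (mu b c * mu b c ^ (D-1))" by simp
  also have "mu b c * mu b c ^ (D-1) = mu b c ^ D" using assms
    by (metis Suc_diff_1 less_le_trans power_Suc zero_less_one)
  finally show ?thesis .
qed


lemma take_snoc_le: "s \<le> length t \<Longrightarrow> take s (t @ [z]) = take s t"
  by simp

lemma tail_aux:
  assumes x: "2 \<le> x" and y: "1 \<le> y"
  shows "\<forall>\<sigma>1 \<sigma>2. length \<sigma>1 = n \<longrightarrow> length \<sigma>2 = n \<longrightarrow>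
     (\<forall>s\<le>n. nT (take s \<sigma>2) \<le> nT (take s \<sigma>1)) \<longrightarrow>
     real (wt x y \<sigma>1 * wt (x-1) (y+1) \<sigma>2) * mu (y + nF \<sigma>1) (x + nT \<sigma>2) ^ (nT \<sigma>1 - nT \<sigma>2)
       \<le> real (wt (x-1) (y+1) \<sigma>1 * wt x y \<sigma>2)"
proof (induction n)
  case 0 then show ?case by simp
next
  case (Suc n)
  show ?case
  proof (intro allI impI)
    fix \<sigma>1 \<sigma>2 :: "bool list"
    assume l1: "length \<sigma>1 = Suc n" and l2: "length \<sigma>2 = Suc n"
      and dom: "\<forall>s\<le>Suc n. nT (take s \<sigma>2) \<le> nT (take s \<sigma>1)"
    obtain \<tau>1 s1 where E1: "\<sigma>1 = \<tau>1 @ [s1]" using l1 by (cases \<sigma>1 rule: rev_exhaust) auto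
    obtain \<tau>2 s2 where E2: "\<sigma>2 = \<tau>2 @ [s2]" using l2 by (cases \<sigma>2 rule: rev_exhaust) auto
    have lt1: "length \<tau>1 = n" using l1 E1 by simp
    have lt2: "length \<tau>2 = n" using l2 E2 by simp
    have domt: "\<forall>s\<le>n. nT (take s \<tau>2) \<le> nT (take s \<tau>1)"
    proof (intro allI impI)
      fix s assume "s \<le> n"
      hence "nT (take s \<sigma>2) \<le> nT (take s \<sigma>1)" using dom by simp
      thus "nT (take s \<tau>2) \<le> nT (take s \<tau>1)" using \<open>s \<le> n\<close> lt1 lt2 E1 E2 by simp
    qed
    have IH: "real (wt x y \<tau>1 * wt (x-1) (y+1) \<tau>2) * mu (y + nF \<tau>1) (x + nT \<tau>2) ^ (nT \<tau>1 - nT \<tau>2)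
       \<le> real (wt (x-1) (y+1) \<tau>1 * wt x y \<tau>2)"
      by (rule Suc.IH[rule_format, OF lt1 lt2 domt[rule_format]])
    have fin: "nT \<sigma>2 \<le> nT \<sigma>1" using dom[rule_format, of "Suc n"] l1 l2 by simp
    define e1 where "e1 = nT \<tau>1"
    define e2 where "e2 = nT \<tau>2"
    define n1 where "n1 = nF \<tau>1"
    define n2 where "n2 = nF \<tau>2"
    define b where "b = y + n1"
    define c where "c = x + e2"
    define a where "a = x + e1"
    define d where "d = y + n2"
    define D where "D = e1 - e2"
    have s1e: "e1 + n1 = n" using nT_nF[of \<tau>1] lt1 e1_def n1_def by simp
    have s2e: "e2 + n2 = n" using nT_nF[of \<tau>2] lt2 e2_def n2_def by simp
    have e21: "e2 \<le> e1" using domt[rule_format, of n] lt1 lt2 e1_def e2_def by simp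
    have aD: "a = c + D" using e21 by (simp add: a_def c_def D_def)
    have dD: "d = b + D" using e21 s1e s2e by (simp add: d_def b_def D_def)
    have b1: "1 \<le> b" using y b_def by simp
    have c2: "2 \<le> c" using x c_def by simp
    define Ov where "Ov = real (wt x y \<tau>1 * wt (x-1) (y+1) \<tau>2)"
    define Nv where "Nv = real (wt (x-1) (y+1) \<tau>1 * wt x y \<tau>2)"
    have IH': "Ov * mu b c ^ D \<le> Nv" using IH
      by (simp add: Ov_def Nv_def b_def c_def D_def e1_def e2_def n1_def)
    have Ov0: "0 \<le> Ov" by (simp add: Ov_def)
    have W1: "wt x y \<sigma>1 = wt x y \<tau>1 * (if s1 then b else a)"
      by (simp add: E1 wt_snoc b_def a_def n1_def e1_def)
    have W2: "wt (x-1) (y+1) \<sigma>2 = wt (x-1) (y+1) \<tau>2 * (if s2 then d+1 else c-1)"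
      using x by (simp add: E2 wt_snoc d_def c_def n2_def e2_def)
    have W3: "wt (x-1) (y+1) \<sigma>1 = wt (x-1) (y+1) \<tau>1 * (if s1 then b+1 else a-1)"
      using x by (simp add: E1 wt_snoc b_def a_def n1_def e1_def)
    have W4: "wt x y \<sigma>2 = wt x y \<tau>2 * (if s2 then d else c)"
      by (simp add: E2 wt_snoc d_def c_def n2_def e2_def)
    define fo where "fo = real ((if s1 then b else a) * (if s2 then d+1 else c-1))"
    define fn where "fn = real ((if s1 then b+1 else a-1) * (if s2 then d else c))"
    have L: "real (wt x y \<sigma>1 * wt (x-1) (y+1) \<sigma>2) = Ov * fo"
      unfolding W1 W2 Ov_def fo_def by (simp only: of_nat_mult mult_ac)
    have R: "real (wt (x-1) (y+1) \<sigma>1 * wt x y \<sigma>2) = Nv * fn"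
      unfolding W3 W4 Nv_def fn_def by (simp only: of_nat_mult mult_ac)
    have M: "mu (y + nF \<sigma>1) (x + nT \<sigma>2) = mu (if s1 then b else b+1) (if s2 then c+1 else c)"
      by (simp add: E1 E2 b_def c_def n1_def e2_def)
    have DD: "nT \<sigma>1 - nT \<sigma>2 = (if s1 then e1 + 1 else e1) - (if s2 then e2 + 1 else e2)"
      by (simp add: E1 E2 e1_def e2_def)
    have fn0: "0 \<le> fn" by (simp add: fn_def)
    have key: "fo * mu (if s1 then b else b+1) (if s2 then c+1 else c) ^ (nT \<sigma>1 - nT \<sigma>2) \<le> fn * mu b c ^ D"
    proof (cases s1; cases s2)
      assume A1: "s1" and A2: "s2"
      have ex: "nT \<sigma>1 - nT \<sigma>2 = D" using DD A1 A2 by (simp add: D_def)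
      have bd: "b \<le> d" using dD by simp
      have "fo * mu b (c+1) ^ D \<le> fn * mu b c ^ D"
        unfolding fo_def fn_def if_P[OF A1] if_P[OF A2] by (rule case_EE[OF b1 c2 bd])
      thus ?thesis by (simp only: ex if_P[OF A1] if_P[OF A2])
    next
      assume A1: "s1" and A2: "\<not> s2"
      have ex: "nT \<sigma>1 - nT \<sigma>2 = Suc D" using DD A1 A2 e21 by (simp add: D_def)
      have "fo * mu b c ^ Suc D \<le> fn * mu b c ^ D"
        unfolding fo_def fn_def if_P[OF A1] if_not_P[OF A2] by (rule case_EN[OF b1 c2])
      thus ?thesis by (simp only: ex if_P[OF A1] if_not_P[OF A2])
    next
      assume A1: "\<not> s1" and A2: "s2"
      have "e2 + 1 \<le> e1" using fin A1 A2 by (simp add: E1 E2 e1_def e2_def)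
      hence D1: "1 \<le> D" by (simp add: D_def)
      have ex: "nT \<sigma>1 - nT \<sigma>2 = D - 1" using DD A1 A2 by (simp add: D_def)
      have ca: "c + 1 \<le> a" and bd: "b + 1 \<le> d" using aD dD D1 by simp_all
      have "fo * mu (b+1) (c+1) ^ (D-1) \<le> fn * mu b c ^ D"
        unfolding fo_def fn_def if_not_P[OF A1] if_P[OF A2] by (rule case_NE[OF b1 c2 ca bd D1])
      thus ?thesis by (simp only: ex if_not_P[OF A1] if_P[OF A2])
    next
      assume A1: "\<not> s1" and A2: "\<not> s2"
      have ex: "nT \<sigma>1 - nT \<sigma>2 = D" using DD A1 A2 by (simp add: D_def)
      have ca: "c \<le> a" using aD by simp
      have "fo * mu (b+1) c ^ D \<le> fn * mu b c ^ D"
        unfolding fo_def fn_def if_not_P[OF A1] if_not_P[OF A2] by (rule case_NN[OF b1 c2 ca])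
      thus ?thesis by (simp only: ex if_not_P[OF A1] if_not_P[OF A2])
    qed
    have "(Ov*fo) * mu (if s1 then b else b+1) (if s2 then c+1 else c) ^ (nT \<sigma>1 - nT \<sigma>2) \<le> Nv*fn"
      by (rule step_help[OF IH' Ov0 fn0 key])
    thus "real (wt x y \<sigma>1 * wt (x-1) (y+1) \<sigma>2) * mu (y + nF \<sigma>1) (x + nT \<sigma>2) ^ (nT \<sigma>1 - nT \<sigma>2)
       \<le> real (wt (x-1) (y+1) \<sigma>1 * wt x y \<sigma>2)" by (simp only: L R M)
  qed
qed

lemma tail:
  assumes x: "2 \<le> x" and y: "1 \<le> y" and len: "length \<sigma>1 = length \<sigma>2"
    and dom: "\<forall>s\<le>length \<sigma>1. nT (take s \<sigma>2) \<le> nT (take s \<sigma>1)"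
  shows "wt x y \<sigma>1 * wt (x-1) (y+1) \<sigma>2 \<le> wt (x-1) (y+1) \<sigma>1 * wt x y \<sigma>2"
proof -
  have h: "real (wt x y \<sigma>1 * wt (x-1) (y+1) \<sigma>2) * mu (y + nF \<sigma>1) (x + nT \<sigma>2) ^ (nT \<sigma>1 - nT \<sigma>2)
       \<le> real (wt (x-1) (y+1) \<sigma>1 * wt x y \<sigma>2)"
    using tail_aux[OF x y, of "length \<sigma>1", rule_format, OF refl len[symmetric] dom[rule_format]] .
  define M where "M = mu (y + nF \<sigma>1) (x + nT \<sigma>2) ^ (nT \<sigma>1 - nT \<sigma>2)"
  define X where "X = wt x y \<sigma>1 * wt (x-1) (y+1) \<sigma>2"
  define Y where "Y = wt (x-1) (y+1) \<sigma>1 * wt x y \<sigma>2"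
  have hm: "1 \<le> M"
    unfolding M_def using mu_ge1[of "y + nF \<sigma>1" "x + nT \<sigma>2"] x y by (intro one_le_power) auto
  have h': "real X * M \<le> real Y" using h unfolding M_def X_def Y_def .
  have r0: "0 \<le> real X" by simp
  have "real X * 1 \<le> real X * M" using mult_left_mono[OF hm r0] .
  hence "real X \<le> real Y" using h' by linarith
  hence "X \<le> Y" by (rule of_nat_le_iff[THEN iffD1])
  thus ?thesis unfolding X_def Y_def .
qed



definition fd :: "bool list \<Rightarrow> bool list \<Rightarrow> nat \<Rightarrow> int" where
  "fd q p s = int (nT (take s q)) - int (nT (take s p))"
definition tm :: "bool list \<Rightarrow> bool list \<Rightarrow> nat" where
  "tm q p = Max {s. s \<le> length q \<and> fd q p s \<le> 1}"
definition tm' :: "bool list \<Rightarrow> bool list \<Rightarrow> nat" where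
  "tm' q p = Max {s. s \<le> length q \<and> 1 \<le> fd q p s}"
definition sw :: "bool list \<times> bool list \<Rightarrow> bool list \<times> bool list" where
  "sw qp = (let q = fst qp; p = snd qp; t = tm q p in (take t q @ drop t p, take t p @ drop t q))"
definition unsw :: "bool list \<times> bool list \<Rightarrow> bool list \<times> bool list" where
  "unsw qp = (let q = fst qp; p = snd qp; t = tm' q p in (take t q @ drop t p, take t p @ drop t q))"
definition Ls :: "nat \<Rightarrow> nat \<Rightarrow> bool list set" where
  "Ls L j = {\<sigma>. length \<sigma> = L \<and> nT \<sigma> = j}"

lemma nT_take_Suc_le: "nT (take (Suc s) xs) \<le> Suc (nT (take s xs))"
proof (cases "s < length xs")
  case True thus ?thesis by (simp add: take_Suc_conv_app_nth)
next
  case False thus ?thesis by simp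
qed

lemma nT_take_Suc_ge: "nT (take s xs) \<le> nT (take (Suc s) xs)"
proof (cases "s < length xs")
  case True thus ?thesis by (simp add: take_Suc_conv_app_nth)
next
  case False thus ?thesis by simp
qed

lemma fd_step: "fd q p (Suc s) \<le> fd q p s + 1"
  using nT_take_Suc_le[of s q] nT_take_Suc_ge[of s p] unfolding fd_def by linarith

lemma fd_0[simp]: "fd q p 0 = 0" by (simp add: fd_def)

lemma nT_take_split: "t \<le> s \<Longrightarrow> nT (take s xs) = nT (take t xs) + nT (take (s - t) (drop t xs))"
  using take_add[of t "s - t" xs] by simp

lemma tm_props:
  assumes q: "q \<in> Ls L (j+2)" and p: "p \<in> Ls L j"
  shows "tm q p < L" "fd q p (tm q p) = 1" "\<And>s. tm q p < s \<Longrightarrow> s \<le> L \<Longrightarrow> 2 \<le> fd q p s"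
proof -
  define S where "S = {s. s \<le> length q \<and> fd q p s \<le> 1}"
  have lq: "length q = L" and lp: "length p = L" using q p by (auto simp: Ls_def)
  have fin: "finite S" unfolding S_def by (rule finite_subset[of _ "{..length q}"]) auto
  have ne: "0 \<in> S" unfolding S_def by simp
  have tS: "tm q p \<in> S" unfolding tm_def S_def[symmetric] using fin ne by (intro Max_in) auto
  have big: "\<And>s. tm q p < s \<Longrightarrow> s \<le> L \<Longrightarrow> 2 \<le> fd q p s"
  proof -
    fix s assume a: "tm q p < s" "s \<le> L"
    have "s \<notin> S"
    proof
      assume "s \<in> S"
      hence "s \<le> tm q p" unfolding tm_def S_def[symmetric] using fin by (intro Max_ge)
      thus False using a by simp
    qed
    thus "2 \<le> fd q p s" using a lq unfolding S_def by auto
  qed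
  show "\<And>s. tm q p < s \<Longrightarrow> s \<le> L \<Longrightarrow> 2 \<le> fd q p s" by (rule big)
  have fL: "fd q p L = 2" using q p lq lp by (simp add: fd_def Ls_def)
  have tle: "tm q p \<le> L" and tf: "fd q p (tm q p) \<le> 1" using tS lq unfolding S_def by auto
  show tl: "tm q p < L" using tle tf fL by (cases "tm q p = L") auto
  have "2 \<le> fd q p (Suc (tm q p))" using big[of "Suc (tm q p)"] tl by simp
  thus "fd q p (tm q p) = 1" using fd_step[of q p "tm q p"] tf by linarith
qed

lemma sw_facts:
  assumes q: "q \<in> Ls L (j+2)" and p: "p \<in> Ls L j"
  defines "t \<equiv> tm q p"
  defines "q' \<equiv> take t q @ drop t p" and "p' \<equiv> take t p @ drop t q"
  shows "sw (q,p) = (q',p')" "q' \<in> Ls L (j+1)" "p' \<in> Ls L (j+1)" "unsw (q',p') = (q,p)"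
    "\<And>s. s \<le> L \<Longrightarrow> int (nT (take s (drop t p))) \<le> int (nT (take s (drop t q)))"
proof -
  have lq: "length q = L" and lp: "length p = L" and nq: "nT q = j+2" and np: "nT p = j"
    using q p by (auto simp: Ls_def)
  have tl: "t < L" and ft: "fd q p t = 1" and big: "\<And>s. t < s \<Longrightarrow> s \<le> L \<Longrightarrow> 2 \<le> fd q p s"
    using tm_props[OF q p] unfolding t_def by auto
  show "sw (q,p) = (q',p')" unfolding sw_def q'_def p'_def t_def by (simp add: Let_def)
  have ltq: "length (take t q) = t" and ltp: "length (take t p) = t" using tl lq lp by auto
  have lq': "length q' = L" and lp': "length p' = L" unfolding q'_def p'_def using tl lq lp by auto
  have sq: "nT q = nT (take t q) + nT (drop t q)" and sp: "nT p = nT (take t p) + nT (drop t p)"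
    by (metis append_take_drop_id nT_append)+
  have ftt: "int (nT (take t q)) = int (nT (take t p)) + 1" using ft unfolding fd_def by simp
  have nq': "nT q' = nT (take t q) + nT (drop t p)" by (simp add: q'_def)
  have np': "nT p' = nT (take t p) + nT (drop t q)" by (simp add: p'_def)
  have "nT q' = j+1" using nq' sq sp nq np ftt by linarith
  thus "q' \<in> Ls L (j+1)" unfolding Ls_def using lq' by simp
  have "nT p' = j+1" using np' sq sp nq np ftt by linarith
  thus "p' \<in> Ls L (j+1)" unfolding Ls_def using lp' by simp
  have low: "\<And>s. s \<le> t \<Longrightarrow> fd q' p' s = fd q p s"
    unfolding fd_def q'_def p'_def using ltq ltp by simp
  have high: "\<And>s. t \<le> s \<Longrightarrow> s \<le> L \<Longrightarrow> fd q' p' s = 2 - fd q p s"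
  proof -
    fix s assume ts: "t \<le> s" "s \<le> L"
    have a1: "nT (take s q') = nT (take t q) + nT (take (s-t) (drop t p))"
      unfolding q'_def using ltq ts by simp
    have a2: "nT (take s p') = nT (take t p) + nT (take (s-t) (drop t q))"
      unfolding p'_def using ltp ts by simp
    have a3: "nT (take s q) = nT (take t q) + nT (take (s-t) (drop t q))"
      using nT_take_split[OF ts(1)] .
    have a4: "nT (take s p) = nT (take t p) + nT (take (s-t) (drop t p))"
      using nT_take_split[OF ts(1)] .
    show "fd q' p' s = 2 - fd q p s" unfolding fd_def using a1 a2 a3 a4 ftt by simp
  qed
  have tm'eq: "tm' q' p' = t"
    unfolding tm'_def
  proof (rule Max_eqI)
    show "finite {s. s \<le> length q' \<and> 1 \<le> fd q' p' s}"
      by (rule finite_subset[of _ "{..length q'}"]) auto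
    show "t \<in> {s. s \<le> length q' \<and> 1 \<le> fd q' p' s}" using low[of t] ft tl lq' by simp
    fix y assume "y \<in> {s. s \<le> length q' \<and> 1 \<le> fd q' p' s}"
    hence y: "y \<le> L" "1 \<le> fd q' p' y" using lq' by auto
    show "y \<le> t"
    proof (rule ccontr)
      assume "\<not> y \<le> t"
      hence "t < y" by simp
      hence "fd q' p' y = 2 - fd q p y" "2 \<le> fd q p y" using high[of y] big[of y] y by auto
      thus False using y by simp
    qed
  qed
  show "unsw (q',p') = (q,p)"
    unfolding unsw_def Let_def fst_conv snd_conv tm'eq
    unfolding q'_def p'_def using ltq ltp by simp
  fix s assume sL: "s \<le> L"
  show "int (nT (take s (drop t p))) \<le> int (nT (take s (drop t q)))"
  proof (cases "s = 0")
    case True thus ?thesis by simp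
  next
    case False
    show ?thesis
    proof (cases "t + s \<le> L")
      case True
      have "2 \<le> fd q p (t+s)" using big[of "t+s"] False True by simp
      moreover have "nT (take (t+s) q) = nT (take t q) + nT (take s (drop t q))"
        using nT_take_split[of t "t+s" q] by simp
      moreover have "nT (take (t+s) p) = nT (take t p) + nT (take s (drop t p))"
        using nT_take_split[of t "t+s" p] by simp
      ultimately show ?thesis using ftt unfolding fd_def by simp
    next
      case False
      hence "take s (drop t q) = drop t q" "take s (drop t p) = drop t p" using lq lp by auto
      moreover have "int (nT (drop t p)) \<le> int (nT (drop t q))" using sq sp nq np ftt by simp
      ultimately show ?thesis by simp
    qed
  qed
qed

lemma sw_wt:
  assumes q: "q \<in> Ls L (j+2)" and p: "p \<in> Ls L j" and r: "1 \<le> r"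
  shows "wt r 1 q * wt r 1 p \<le> wt r 1 (fst (sw (q,p))) * wt r 1 (snd (sw (q,p)))"
proof -
  define t where "t = tm q p"
  have lq: "length q = L" and lp: "length p = L" using q p by (auto simp: Ls_def)
  have tl: "t < L" and ft: "fd q p t = 1"
    using tm_props[OF q p] unfolding t_def by auto
  have SW: "sw (q,p) = (take t q @ drop t p, take t p @ drop t q)"
    using sw_facts(1)[OF q p] unfolding t_def by simp
  have dom0: "\<And>s. s \<le> L \<Longrightarrow> int (nT (take s (drop t p))) \<le> int (nT (take s (drop t q)))"
    using sw_facts(5)[OF q p] unfolding t_def by blast
  define u1 where "u1 = take t q"
  define u2 where "u2 = take t p"
  define \<sigma>1 where "\<sigma>1 = drop t q"
  define \<sigma>2 where "\<sigma>2 = drop t p"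
  have lu1: "length u1 = t" and lu2: "length u2 = t" using tl lq lp by (auto simp: u1_def u2_def)
  have ftt: "nT u1 = nT u2 + 1" using ft unfolding fd_def u1_def u2_def by simp
  have nf1: "nT u1 + nF u1 = t" and nf2: "nT u2 + nF u2 = t" using nT_nF lu1 lu2 by metis+
  define x where "x = r + nT u1"
  define y where "y = 1 + nF u1"
  have x2: "2 \<le> x" using r ftt by (simp add: x_def)
  have y1: "1 \<le> y" by (simp add: y_def)
  have X2: "r + nT u2 = x - 1" using ftt by (simp add: x_def)
  have Y2: "1 + nF u2 = y + 1" using ftt nf1 nf2 by (simp add: y_def)
  have len: "length \<sigma>1 = length \<sigma>2" using lq lp by (simp add: \<sigma>1_def \<sigma>2_def)
  have dom: "\<forall>s\<le>length \<sigma>1. nT (take s \<sigma>2) \<le> nT (take s \<sigma>1)"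
  proof (intro allI impI)
    fix s assume "s \<le> length \<sigma>1"
    hence "s \<le> L" using lq by (simp add: \<sigma>1_def)
    thus "nT (take s \<sigma>2) \<le> nT (take s \<sigma>1)" using dom0[of s] by (simp add: \<sigma>1_def \<sigma>2_def)
  qed
  have T: "wt x y \<sigma>1 * wt (x-1) (y+1) \<sigma>2 \<le> wt (x-1) (y+1) \<sigma>1 * wt x y \<sigma>2"
    by (rule tail[OF x2 y1 len dom])
  have Wq: "wt r 1 q = wt r 1 u1 * wt x y \<sigma>1"
    using wt_append[of r 1 u1 \<sigma>1] by (simp add: u1_def \<sigma>1_def x_def y_def add.commute)
  have Wp: "wt r 1 p = wt r 1 u2 * wt (x-1) (y+1) \<sigma>2"
    using wt_append[of r 1 u2 \<sigma>2] X2 Y2 by (simp add: u2_def \<sigma>2_def add.commute)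
  have Wq': "wt r 1 (fst (sw (q,p))) = wt r 1 u1 * wt x y \<sigma>2"
    using wt_append[of r 1 u1 \<sigma>2] SW by (simp add: u1_def \<sigma>2_def x_def y_def add.commute)
  have Wp': "wt r 1 (snd (sw (q,p))) = wt r 1 u2 * wt (x-1) (y+1) \<sigma>1"
    using wt_append[of r 1 u2 \<sigma>1] SW X2 Y2 by (simp add: u2_def \<sigma>1_def add.commute)
  have "wt r 1 q * wt r 1 p = (wt r 1 u1 * wt r 1 u2) * (wt x y \<sigma>1 * wt (x-1) (y+1) \<sigma>2)"
    unfolding Wq Wp by (simp only: mult_ac)
  also have "\<dots> \<le> (wt r 1 u1 * wt r 1 u2) * (wt (x-1) (y+1) \<sigma>1 * wt x y \<sigma>2)"
    using T by (rule mult_left_mono) simp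
  also have "\<dots> = wt r 1 (fst (sw (q,p))) * wt r 1 (snd (sw (q,p)))"
    unfolding Wq' Wp' by (simp only: mult_ac)
  finally show ?thesis .
qed

lemma finite_Ls: "finite (Ls L j)"
proof -
  have "finite {xs. set xs \<subseteq> (UNIV::bool set) \<and> length xs = L}"
    by (rule finite_lists_length_eq) simp
  thus ?thesis by (rule finite_subset[rotated]) (auto simp: Ls_def)
qed

definition bsum :: "nat \<Rightarrow> nat \<Rightarrow> nat \<Rightarrow> nat \<Rightarrow> nat" where
  "bsum r l L j = (\<Sum>\<sigma>\<in>Ls L j. wt r 1 \<sigma> ^ l)"

lemma bsum_LC:
  assumes r: "1 \<le> r"
  shows "bsum r l L j * bsum r l L (j+2) \<le> (bsum r l L (j+1))^2"
proof -
  define W where "W = (\<lambda>\<sigma>. wt r 1 \<sigma> ^ l)"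
  define A where "A = Ls L (j+2) \<times> Ls L j"
  define B where "B = Ls L (j+1) \<times> Ls L (j+1)"
  have "bsum r l L j * bsum r l L (j+2) = (\<Sum>q\<in>Ls L (j+2). W q) * (\<Sum>p\<in>Ls L j. W p)"
    by (simp add: bsum_def W_def)
  also have "\<dots> = (\<Sum>qp\<in>A. W (fst qp) * W (snd qp))"
    unfolding A_def sum_product sum.cartesian_product by (simp add: case_prod_beta)
  also have "\<dots> \<le> (\<Sum>qp\<in>A. W (fst (sw qp)) * W (snd (sw qp)))"
  proof (rule sum_mono)
    fix qp assume "qp \<in> A"
    then obtain q p where qp: "qp = (q,p)" "q \<in> Ls L (j+2)" "p \<in> Ls L j" unfolding A_def by auto
    have "wt r 1 q * wt r 1 p \<le> wt r 1 (fst (sw (q,p))) * wt r 1 (snd (sw (q,p)))"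
      by (rule sw_wt[OF qp(2,3) r])
    hence "(wt r 1 q * wt r 1 p)^l \<le> (wt r 1 (fst (sw (q,p))) * wt r 1 (snd (sw (q,p))))^l"
      by (rule power_mono) simp
    thus "W (fst qp) * W (snd qp) \<le> W (fst (sw qp)) * W (snd (sw qp))"
      unfolding W_def qp(1) by (simp add: power_mult_distrib)
  qed
  also have "\<dots> = (\<Sum>y\<in>sw ` A. W (fst y) * W (snd y))"
  proof -
    have "inj_on sw A"
    proof (rule inj_on_inverseI)
      fix qp assume "qp \<in> A"
      then obtain q p where qp: "qp = (q,p)" "q \<in> Ls L (j+2)" "p \<in> Ls L j" unfolding A_def by auto
      show "unsw (sw qp) = qp" using sw_facts(1,4)[OF qp(2,3)] qp(1) by simp
    qed
    thus ?thesis by (simp add: sum.reindex)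
  qed
  also have "\<dots> \<le> (\<Sum>y\<in>B. W (fst y) * W (snd y))"
  proof (rule sum_mono2)
    show "finite B" unfolding B_def using finite_Ls by simp
    show "sw ` A \<subseteq> B"
    proof
      fix y assume "y \<in> sw ` A"
      then obtain q p where qp: "y = sw (q,p)" "q \<in> Ls L (j+2)" "p \<in> Ls L j" unfolding A_def by auto
      show "y \<in> B" using sw_facts(1,2,3)[OF qp(2,3)] qp(1) unfolding B_def by auto
    qed
  qed simp
  also have "\<dots> = (bsum r l L (j+1))^2"
    unfolding B_def bsum_def power2_eq_square sum_product sum.cartesian_product W_def
    by (simp add: case_prod_beta)
  finally show ?thesis .
qed



lemma bl_sub: "bl n f \<subseteq> {1..n}" by (auto simp: bl_def)

lemma finite_bl: "finite (bl n f)" using bl_sub by (rule finite_subset) simp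

lemma bl_Suc: "bl (Suc n) f = bl n f \<union> (if f (Suc n) \<in> f ` {1..n} then {} else {Suc n})"
proof -
  have e: "{1..<Suc n} = {1..n}" by auto
  show ?thesis unfolding bl_def by (auto simp: e le_Suc_eq)
qed

lemma card_img_bl: "card (f ` {1..n}) = card (bl n f)"
proof (induction n)
  case 0 thus ?case by (simp add: bl_def)
next
  case (Suc n)
  have "{1..Suc n} = insert (Suc n) {1..n}" by auto
  hence img: "f ` {1..Suc n} = insert (f (Suc n)) (f ` {1..n})" by simp
  have nb: "Suc n \<notin> bl n f" using bl_sub by fastforce
  show ?case
  proof (cases "f (Suc n) \<in> f ` {1..n}")
    case True
    thus ?thesis using Suc.IH img by (simp add: bl_Suc insert_absorb)
  next
    case False
    thus ?thesis using Suc.IH img nb finite_bl[of n f] by (simp add: bl_Suc)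
  qed
qed

lemma bl_upd_out: "n < m \<Longrightarrow> bl n (f(m := v)) = bl n f"
proof -
  assume "n < m"
  have "\<And>i. i \<in> {1..n} \<Longrightarrow> (f(m:=v)) ` {1..<i} = f ` {1..<i}" using \<open>n < m\<close> by auto
  thus ?thesis unfolding bl_def using \<open>n < m\<close> by auto
qed

lemma subexc_out: "f \<in> subexc n \<Longrightarrow> f (Suc n) = 0"
  by (simp add: subexc_def)

lemma subexc_img: "f \<in> subexc n \<Longrightarrow> f ` {1..n} \<subseteq> {1..n}"
  by (auto simp: subexc_def)

lemma subexc_restrict: "g \<in> subexc (Suc n) \<Longrightarrow> g(Suc n := 0) \<in> subexc n"
  by (auto simp: subexc_def)

lemma subexc_extend: "f \<in> subexc n \<Longrightarrow> v \<in> {1..Suc n} \<Longrightarrow> f(Suc n := v) \<in> subexc (Suc n)"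
  by (auto simp: subexc_def le_Suc_eq)

lemma subexc_top: "g \<in> subexc (Suc n) \<Longrightarrow> g (Suc n) \<in> {1..Suc n}"
  by (auto simp: subexc_def)

lemma bl_ext: "bl (Suc n) (f(Suc n := v)) = bl n f \<union> (if v \<in> f ` {1..n} then {} else {Suc n})"
proof -
  have "(f(Suc n := v)) ` {1..n} = f ` {1..n}" by auto
  thus ?thesis using bl_Suc[of n "f(Suc n := v)"] bl_upd_out[of n "Suc n" f v] by simp
qed

lemma finite_subexc: "finite (subexc n)"
proof -
  have "finite {f. \<forall>x. (x \<in> {1..n} \<longrightarrow> f x \<in> {0..n}) \<and> (x \<notin> {1..n} \<longrightarrow> f x = (0::nat))}"
    by (rule finite_set_of_finite_funs) auto
  moreover have "subexc n \<subseteq> {f. \<forall>x. (x \<in> {1..n} \<longrightarrow> f x \<in> {0..n}) \<and> (x \<notin> {1..n} \<longrightarrow> f x = (0::nat))}"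
    unfolding subexc_def by (auto intro: le_trans)
  ultimately show ?thesis by (rule finite_subset[rotated])
qed

definition Fib :: "nat \<Rightarrow> nat set \<Rightarrow> (nat \<Rightarrow> nat) set" where
  "Fib n S = {f \<in> subexc n. bl n f = S}"

lemma finite_Fib: "finite (Fib n S)"
  unfolding Fib_def using finite_subexc by simp

lemma Fib_Suc_set:
  assumes S: "S \<subseteq> {1..n}"
  shows "Fib (Suc n) (S \<union> (if b then {Suc n} else {})) =
    (\<lambda>(f,v). f(Suc n := v)) ` (SIGMA f:Fib n S. {v \<in> {1..Suc n}. (v \<notin> f ` {1..n}) = b})"
proof (rule set_eqI)
  fix g
  show "g \<in> Fib (Suc n) (S \<union> (if b then {Suc n} else {})) \<longleftrightarrow>
    g \<in> (\<lambda>(f,v). f(Suc n := v)) ` (SIGMA f:Fib n S. {v \<in> {1..Suc n}. (v \<notin> f ` {1..n}) = b})"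
  proof
    assume g: "g \<in> Fib (Suc n) (S \<union> (if b then {Suc n} else {}))"
    define f where "f = g(Suc n := 0)"
    define v where "v = g (Suc n)"
    have gs: "g \<in> subexc (Suc n)" and gb: "bl (Suc n) g = S \<union> (if b then {Suc n} else {})"
      using g by (auto simp: Fib_def)
    have fs: "f \<in> subexc n" using subexc_restrict[OF gs] by (simp add: f_def)
    have gf: "g = f(Suc n := v)" by (simp add: f_def v_def)
    have v1: "v \<in> {1..Suc n}" using subexc_top[OF gs] by (simp add: v_def)
    have blg: "bl (Suc n) g = bl n f \<union> (if v \<in> f ` {1..n} then {} else {Suc n})"
      using bl_ext[of n f v] gf by simp
    have nS: "Suc n \<notin> S" using S by auto
    have nB: "Suc n \<notin> bl n f" using bl_sub[of n f] by auto
    have "bl n f = S"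
    proof -
      have "bl n f = bl (Suc n) g - {Suc n}" using blg nB by auto
      also have "\<dots> = S" using gb nS by auto
      finally show ?thesis .
    qed
    moreover have "(v \<notin> f ` {1..n}) = b"
    proof -
      have "(Suc n \<in> bl (Suc n) g) = b" using gb nS by auto
      moreover have "(Suc n \<in> bl (Suc n) g) = (v \<notin> f ` {1..n})" using blg nB by auto
      ultimately show ?thesis by simp
    qed
    ultimately have "(f,v) \<in> (SIGMA f:Fib n S. {v \<in> {1..Suc n}. (v \<notin> f ` {1..n}) = b})"
      using fs v1 by (simp add: Fib_def)
    thus "g \<in> (\<lambda>(f,v). f(Suc n := v)) ` (SIGMA f:Fib n S. {v \<in> {1..Suc n}. (v \<notin> f ` {1..n}) = b})"
      using gf by (intro image_eqI[of _ _ "(f,v)"]) auto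
  next
    assume "g \<in> (\<lambda>(f,v). f(Suc n := v)) ` (SIGMA f:Fib n S. {v \<in> {1..Suc n}. (v \<notin> f ` {1..n}) = b})"
    then obtain f v where gf: "g = f(Suc n := v)" and f: "f \<in> Fib n S" and v1: "v \<in> {1..Suc n}"
      and vb: "(v \<notin> f ` {1..n}) = b" by auto
    have fs: "f \<in> subexc n" and fb: "bl n f = S" using f by (auto simp: Fib_def)
    have "g \<in> subexc (Suc n)" using subexc_extend[OF fs v1] gf by simp
    moreover have "bl (Suc n) g = S \<union> (if b then {Suc n} else {})"
      using bl_ext[of n f v] gf fb vb by auto
    ultimately show "g \<in> Fib (Suc n) (S \<union> (if b then {Suc n} else {}))" by (simp add: Fib_def)
  qed
qed

lemma Fib_Suc_card:
  assumes S: "S \<subseteq> {1..n}"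
  shows "card (Fib (Suc n) (S \<union> (if b then {Suc n} else {}))) =
     (if b then Suc n - card S else card S) * card (Fib n S)"
proof -
  define V where "V = (\<lambda>f. {v \<in> {1..Suc n}. (v \<notin> f ` {1..n}) = b})"
  have inj: "inj_on (\<lambda>(f,v). f(Suc n := v)) (SIGMA f:Fib n S. V f)"
  proof (rule inj_onI)
    fix x y assume x: "x \<in> (SIGMA f:Fib n S. V f)" and y: "y \<in> (SIGMA f:Fib n S. V f)"
      and e: "(\<lambda>(f,v). f(Suc n := v)) x = (\<lambda>(f,v). f(Suc n := v)) y"
    obtain f1 v1 where x1: "x = (f1,v1)" "f1 \<in> Fib n S" using x by auto
    obtain f2 v2 where y1: "y = (f2,v2)" "f2 \<in> Fib n S" using y by auto
    have e2: "f1(Suc n := v1) = f2(Suc n := v2)" using e x1 y1 by simp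
    have "v1 = v2" using fun_cong[OF e2, of "Suc n"] by simp
    moreover have "f1 = f2"
    proof
      fix i
      have z1: "f1 (Suc n) = 0" and z2: "f2 (Suc n) = 0"
        using x1 y1 subexc_out by (auto simp: Fib_def)
      show "f1 i = f2 i" using fun_cong[OF e2, of i] z1 z2 by (cases "i = Suc n") auto
    qed
    ultimately show "x = y" using x1 y1 by simp
  qed
  have cV: "\<And>f. f \<in> Fib n S \<Longrightarrow> card (V f) = (if b then Suc n - card S else card S)"
  proof -
    fix f assume f: "f \<in> Fib n S"
    have fs: "f \<in> subexc n" and fb: "bl n f = S" using f by (auto simp: Fib_def)
    have sub: "f ` {1..n} \<subseteq> {1..Suc n}" using subexc_img[OF fs] by auto
    have cimg: "card (f ` {1..n}) = card S" using card_img_bl[of f n] fb by simp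
    show "card (V f) = (if b then Suc n - card S else card S)"
    proof (cases b)
      case True
      hence "V f = {1..Suc n} - f ` {1..n}" unfolding V_def by auto
      thus ?thesis using True card_Diff_subset[OF finite_subset[OF sub] sub] cimg by simp
    next
      case False
      hence "V f = f ` {1..n}" unfolding V_def using sub by auto
      thus ?thesis using False cimg by simp
    qed
  qed
  have "card (Fib (Suc n) (S \<union> (if b then {Suc n} else {}))) = card (SIGMA f:Fib n S. V f)"
    unfolding Fib_Suc_set[OF S, of b] V_def[symmetric] using inj by (rule card_image)
  also have "\<dots> = (\<Sum>f\<in>Fib n S. card (V f))"
    using finite_Fib by (intro card_SigmaI) (auto simp: V_def)
  also have "\<dots> = (\<Sum>f\<in>Fib n S. (if b then Suc n - card S else card S))"
    using cV by (rule sum.cong[OF refl])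
  also have "\<dots> = (if b then Suc n - card S else card S) * card (Fib n S)" by simp
  finally show ?thesis .
qed

definition St :: "bool list \<Rightarrow> nat set" where
  "St \<tau> = {i \<in> {1..length \<tau>}. \<tau> ! (i - 1)}"

lemma St_sub: "St \<tau> \<subseteq> {1..length \<tau>}" by (auto simp: St_def)

lemma St_snoc: "St (\<tau> @ [s]) = St \<tau> \<union> (if s then {Suc (length \<tau>)} else {})"
proof (rule set_eqI)
  fix i
  show "i \<in> St (\<tau> @ [s]) \<longleftrightarrow> i \<in> St \<tau> \<union> (if s then {Suc (length \<tau>)} else {})"
  proof (cases "i = Suc (length \<tau>)")
    case True thus ?thesis by (auto simp: St_def nth_append)
  next
    case False
    hence "i \<in> {1..Suc (length \<tau>)} \<longleftrightarrow> i \<in> {1..length \<tau>}" by auto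
    thus ?thesis using False by (auto simp: St_def nth_append)
  qed
qed

lemma card_St: "card (St \<tau>) = nT \<tau>"
proof (induction \<tau> rule: rev_induct)
  case Nil thus ?case by (simp add: St_def)
next
  case (snoc s \<tau>)
  have "Suc (length \<tau>) \<notin> St \<tau>" using St_sub[of \<tau>] by auto
  moreover have "finite (St \<tau>)" using St_sub[of \<tau>] by (rule finite_subset) simp
  ultimately show ?case using snoc.IH by (simp add: St_snoc)
qed

lemma subexc_0: "subexc 0 = {\<lambda>_. 0}"
  by (auto simp: subexc_def)

lemma Fib_St: "card (Fib (length \<tau>) (St \<tau>)) = wt 0 1 \<tau>"
proof (induction \<tau> rule: rev_induct)
  case Nil
  have "Fib 0 {} = {\<lambda>_. 0}" by (auto simp: Fib_def subexc_0 bl_def)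
  thus ?case by (simp add: St_def)
next
  case (snoc s \<tau>)
  have "card (Fib (length (\<tau> @ [s])) (St (\<tau> @ [s])))
      = (if s then Suc (length \<tau>) - card (St \<tau>) else card (St \<tau>)) * card (Fib (length \<tau>) (St \<tau>))"
    unfolding St_snoc length_append_singleton by (rule Fib_Suc_card[OF St_sub])
  also have "\<dots> = (if s then 1 + nF \<tau> else nT \<tau>) * wt 0 1 \<tau>"
    using snoc.IH card_St[of \<tau>] nT_nF[of \<tau>] by auto
  also have "\<dots> = wt 0 1 (\<tau> @ [s])" by (simp add: wt_snoc)
  finally show ?case .
qed

lemma wt_rep: "wt x 1 (replicate r True) = 1"
  by (induction r arbitrary: x) auto

lemma nT_rep[simp]: "nT (replicate r True) = r" by (simp add: nT_def)
lemma nF_rep[simp]: "nF (replicate r True) = 0" by (simp add: nF_def)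

lemma wt_rep_app: "wt 0 1 (replicate r True @ \<sigma>) = wt r 1 \<sigma>"
proof -
  have "wt 0 1 (replicate r True @ \<sigma>) = wt 0 1 (replicate r True) * wt (0 + r) (1 + 0) \<sigma>"
    by (simp only: wt_append nT_rep nF_rep)
  also have "\<dots> = wt r 1 \<sigma>" by (simp only: wt_rep mult_1 add_0 add_0_right)
  finally show ?thesis .
qed

definition SS :: "nat \<Rightarrow> nat \<Rightarrow> nat \<Rightarrow> nat set set" where
  "SS n r k = {S. S \<subseteq> {1..n} \<and> {1..r} \<subseteq> S \<and> card S = k+1}"

lemma SS_empty: "k+1 < r \<Longrightarrow> SS n r k = {}"
proof (rule ccontr)
  assume "k+1 < r" "SS n r k \<noteq> {}"
  then obtain S where S: "S \<subseteq> {1..n}" "{1..r} \<subseteq> S" "card S = k+1" by (auto simp: SS_def)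
  have "finite S" using S(1) by (rule finite_subset) simp
  hence "card {1..r} \<le> card S" using S(2) by (rule card_mono)
  thus False using S(3) \<open>k+1 < r\<close> by simp
qed

lemma St_nth: "i < length \<tau> \<Longrightarrow> (Suc i \<in> St \<tau>) = \<tau> ! i"
  by (simp add: St_def)

lemma SS_bsum:
  assumes rn: "r \<le> n" and rk: "r \<le> k+1"
  shows "(\<Sum>S\<in>SS n r k. card (Fib n S) ^ l) = bsum r l (n-r) (k+1-r)"
proof -
  define h where "h = (\<lambda>\<sigma>. St (replicate r True @ \<sigma>))"
  have bij: "bij_betw h (Ls (n-r) (k+1-r)) (SS n r k)"
  proof (rule bij_betw_imageI)
    show "inj_on h (Ls (n-r) (k+1-r))"
    proof (rule inj_onI)
      fix \<sigma>1 \<sigma>2 assume s1: "\<sigma>1 \<in> Ls (n-r) (k+1-r)" and s2: "\<sigma>2 \<in> Ls (n-r) (k+1-r)"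
        and e: "h \<sigma>1 = h \<sigma>2"
      have l: "length (replicate r True @ \<sigma>1) = length (replicate r True @ \<sigma>2)"
        using s1 s2 by (simp add: Ls_def)
      have "replicate r True @ \<sigma>1 = replicate r True @ \<sigma>2"
      proof (rule nth_equalityI[OF l])
        fix i assume "i < length (replicate r True @ \<sigma>1)"
        thus "(replicate r True @ \<sigma>1) ! i = (replicate r True @ \<sigma>2) ! i"
          using St_nth[of i "replicate r True @ \<sigma>1"] St_nth[of i "replicate r True @ \<sigma>2"] e l
          unfolding h_def by simp
      qed
      thus "\<sigma>1 = \<sigma>2" by simp
    qed
    show "h ` Ls (n-r) (k+1-r) = SS n r k"
    proof (rule set_eqI, rule iffI)
      fix S assume "S \<in> h ` Ls (n-r) (k+1-r)"
      then obtain \<sigma> where s: "\<sigma> \<in> Ls (n-r) (k+1-r)" and S: "S = h \<sigma>" by auto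
      have ls: "length \<sigma> = n - r" and ns: "nT \<sigma> = k+1-r" using s by (auto simp: Ls_def)
      have "S \<subseteq> {1..n}" using St_sub[of "replicate r True @ \<sigma>"] ls rn unfolding S h_def by simp
      moreover have "{1..r} \<subseteq> S"
      proof
        fix i assume i: "i \<in> {1..r}"
        have a: "i - 1 < r" using i by auto
        have b: "(replicate r True @ \<sigma>) ! (i-1)" using a by (simp add: nth_append)
        have c: "i \<in> {1..length (replicate r True @ \<sigma>)}" using i by auto
        show "i \<in> S" using b c unfolding S h_def St_def by simp
      qed
      moreover have "card S = k+1" using card_St[of "replicate r True @ \<sigma>"] ns rk unfolding S h_def by simp
      ultimately show "S \<in> SS n r k" by (simp add: SS_def)
    next
      fix S assume "S \<in> SS n r k"
      hence S1: "S \<subseteq> {1..n}" and S2: "{1..r} \<subseteq> S" and S3: "card S = k+1" by (auto simp: SS_def)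
      define \<sigma> where "\<sigma> = map (\<lambda>i. (r + i + 1) \<in> S) [0..<n-r]"
      have ls: "length \<sigma> = n - r" by (simp add: \<sigma>_def)
      have hS: "h \<sigma> = S"
      proof (rule set_eqI)
        fix i
        show "i \<in> h \<sigma> \<longleftrightarrow> i \<in> S"
        proof (cases "1 \<le> i \<and> i \<le> n")
          case False thus ?thesis using S1 ls rn unfolding h_def St_def by auto
        next
          case True
          show ?thesis
          proof (cases "i \<le> r")
            case True2: True
            have a: "i - 1 < r" "i \<in> S" using True True2 S2 by auto
            have b: "(replicate r True @ \<sigma>) ! (i-1)" using a(1) by (simp add: nth_append)
            have c: "i \<in> {1..length (replicate r True @ \<sigma>)}" using True ls rn by simp
            show ?thesis using a(2) b c unfolding h_def St_def by simp
          next
            case False2: False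
            have a1: "i - 1 - r < n - r" using True False2 by simp
            have a2: "r + (i - 1 - r) + 1 = i" using True False2 by simp
            have a3: "\<not> (i - 1 < r)" using False2 by simp
            have "(replicate r True @ \<sigma>) ! (i-1) = \<sigma> ! (i - 1 - r)"
              using a3 by (simp add: nth_append)
            also have "\<dots> = (r + (i - 1 - r) + 1 \<in> S)" using a1 by (simp add: \<sigma>_def)
            also have "\<dots> = (i \<in> S)" using a2 by simp
            finally have b: "(replicate r True @ \<sigma>) ! (i-1) = (i \<in> S)" .
            have c: "i \<in> {1..length (replicate r True @ \<sigma>)}" using True ls rn by simp
            show ?thesis using b c unfolding h_def St_def by simp
          qed
        qed
      qed
      have "nT \<sigma> = k+1-r"
      proof -
        have "card (h \<sigma>) = r + nT \<sigma>" using card_St[of "replicate r True @ \<sigma>"] unfolding h_def by simp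
        thus ?thesis using hS S3 by simp
      qed
      hence "\<sigma> \<in> Ls (n-r) (k+1-r)" using ls by (simp add: Ls_def)
      thus "S \<in> h ` Ls (n-r) (k+1-r)" using hS by (intro image_eqI[of _ _ \<sigma>]) auto
    qed
  qed
  have cf: "\<And>\<sigma>. \<sigma> \<in> Ls (n-r) (k+1-r) \<Longrightarrow> card (Fib n (h \<sigma>)) = wt r 1 \<sigma>"
  proof -
    fix \<sigma> assume "\<sigma> \<in> Ls (n-r) (k+1-r)"
    hence "length (replicate r True @ \<sigma>) = n" using rn by (simp add: Ls_def)
    thus "card (Fib n (h \<sigma>)) = wt r 1 \<sigma>"
      using Fib_St[of "replicate r True @ \<sigma>"] wt_rep_app[of r \<sigma>] unfolding h_def by simp
  qed
  have "(\<Sum>S\<in>SS n r k. card (Fib n S) ^ l) = (\<Sum>\<sigma>\<in>Ls (n-r) (k+1-r). card (Fib n (h \<sigma>)) ^ l)"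
    using sum.reindex_bij_betw[OF bij, of "\<lambda>S. card (Fib n S) ^ l"] by simp
  also have "\<dots> = (\<Sum>\<sigma>\<in>Ls (n-r) (k+1-r). wt r 1 \<sigma> ^ l)"
    using cf by (intro sum.cong) auto
  finally show ?thesis by (simp add: bsum_def)
qed

lemma A_sum:
  assumes l: "0 < l"
  shows "A r l n k = (\<Sum>S\<in>SS n r k. card (Fib n S) ^ l)"
proof -
  define LS where "LS = (\<lambda>S. {fs. set fs \<subseteq> Fib n S \<and> length fs = l})"
  have eq: "{fs. length fs = l \<and> (\<forall>f\<in>set fs. f \<in> subexc n)
      \<and> {1..r} \<subseteq> bl n (hd fs) \<and> card (bl n (hd fs)) = k + 1
      \<and> (\<forall>f\<in>set fs. bl n f = bl n (hd fs))} = (\<Union>S\<in>SS n r k. LS S)"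
  proof (rule set_eqI, rule iffI)
    fix fs
    assume "fs \<in> {fs. length fs = l \<and> (\<forall>f\<in>set fs. f \<in> subexc n)
      \<and> {1..r} \<subseteq> bl n (hd fs) \<and> card (bl n (hd fs)) = k + 1
      \<and> (\<forall>f\<in>set fs. bl n f = bl n (hd fs))}"
    hence a: "length fs = l" "\<forall>f\<in>set fs. f \<in> subexc n" "{1..r} \<subseteq> bl n (hd fs)"
      "card (bl n (hd fs)) = k + 1" "\<forall>f\<in>set fs. bl n f = bl n (hd fs)" by auto
    have "bl n (hd fs) \<in> SS n r k" using a bl_sub[of n "hd fs"] by (simp add: SS_def)
    moreover have "fs \<in> LS (bl n (hd fs))" using a unfolding LS_def Fib_def by auto
    ultimately show "fs \<in> (\<Union>S\<in>SS n r k. LS S)" by blast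
  next
    fix fs assume "fs \<in> (\<Union>S\<in>SS n r k. LS S)"
    then obtain S where S: "S \<in> SS n r k" and fs: "set fs \<subseteq> Fib n S" "length fs = l"
      unfolding LS_def by auto
    have "fs \<noteq> []" using fs(2) l by auto
    hence "hd fs \<in> set fs" by (rule hd_in_set)
    hence hb: "bl n (hd fs) = S" using fs(1) by (auto simp: Fib_def)
    show "fs \<in> {fs. length fs = l \<and> (\<forall>f\<in>set fs. f \<in> subexc n)
      \<and> {1..r} \<subseteq> bl n (hd fs) \<and> card (bl n (hd fs)) = k + 1
      \<and> (\<forall>f\<in>set fs. bl n f = bl n (hd fs))}"
      using fs S hb by (auto simp: Fib_def SS_def)
  qed
  have finSS: "finite (SS n r k)"
    by (rule finite_subset[of _ "Pow {1..n}"]) (auto simp: SS_def)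
  have finLS: "\<forall>S\<in>SS n r k. finite (LS S)"
    unfolding LS_def using finite_Fib by (auto intro: finite_lists_length_eq)
  have disj: "\<forall>S\<in>SS n r k. \<forall>S'\<in>SS n r k. S \<noteq> S' \<longrightarrow> LS S \<inter> LS S' = {}"
  proof (intro ballI impI)
    fix S S' :: "nat set" assume "S \<noteq> S'"
    show "LS S \<inter> LS S' = {}"
    proof (rule ccontr)
      assume "LS S \<inter> LS S' \<noteq> {}"
      then obtain fs where fs: "set fs \<subseteq> Fib n S" "set fs \<subseteq> Fib n S'" "length fs = l"
        unfolding LS_def by auto
      have "fs \<noteq> []" using fs(3) l by auto
      hence "hd fs \<in> set fs" by (rule hd_in_set)
      hence "bl n (hd fs) = S" "bl n (hd fs) = S'" using fs by (auto simp: Fib_def)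
      thus False using \<open>S \<noteq> S'\<close> by simp
    qed
  qed
  have "A r l n k = card (\<Union>S\<in>SS n r k. LS S)" unfolding A_def eq ..
  also have "\<dots> = (\<Sum>S\<in>SS n r k. card (LS S))" by (rule card_UN_disjoint[OF finSS finLS disj])
  also have "\<dots> = (\<Sum>S\<in>SS n r k. card (Fib n S) ^ l)"
    unfolding LS_def using finite_Fib by (intro sum.cong refl card_lists_length_eq)
  finally show ?thesis .
qed

theorem mainTheorem9:
  fixes l r n :: nat
  assumes "0 < l" and "0 < r" and "r \<le> n"
  shows "\<forall>k. A r l n k * A r l n (k + 2) \<le> (A r l n (k + 1))\<^sup>2"
proof
  fix k
  show "A r l n k * A r l n (k + 2) \<le> (A r l n (k + 1))\<^sup>2"
  proof (cases "k + 1 < r")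
    case True
    hence "A r l n k = 0" using A_sum[OF assms(1), of r n k] SS_empty[OF True, of n] by simp
    thus ?thesis by simp
  next
    case False
    define j where "j = k + 1 - r"
    have e0: "A r l n k = bsum r l (n-r) j"
      using A_sum[OF assms(1), of r n k] SS_bsum[OF assms(3), of k l] False by (simp add: j_def)
    have j1: "k + 1 + 1 - r = j + 1" and j2: "k + 2 + 1 - r = j + 2" using False by (simp_all add: j_def)
    have r1: "r \<le> k + 1 + 1" and r2: "r \<le> k + 2 + 1" using False by simp_all
    have e1: "A r l n (k+1) = bsum r l (n-r) (j+1)"
      using A_sum[OF assms(1), of r n "k+1"] SS_bsum[OF assms(3) r1, of l] unfolding j1 by simp
    have e2: "A r l n (k+2) = bsum r l (n-r) (j+2)"
      using A_sum[OF assms(1), of r n "k+2"] SS_bsum[OF assms(3) r2, of l] unfolding j2 by simp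
    show ?thesis unfolding e0 e1 e2 using bsum_LC[of r l "n-r" j] assms(2) by simp
  qed
qed


end
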